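(* Let $k$ be an algebraically closed field of characteristic $p\ge0$, $n\ge1$, and let $\pi : \mathrm{GL}(n,k)\to\mathrm{PGL}(n,k)$ be the natural surjection. The map $\varpi : \mathrm{Hom}_{\mathrm{alg.gr}}(\mathbb{G}_a,\mathrm{GL}(n,k))\to\mathrm{Hom}_{\mathrm{alg.gr}}(\mathbb{G}_a,\mathrm{PGL}(n,k))$, $\varpi(\varphi) = \pi\circ\varphi$, is bijective.
   Context: $\mathbb{G}_a$ denotes the additive group of $k$; $\mathrm{Hom}_{\mathrm{alg.gr}}$ denotes the set of homomorphisms of algebraic groups. *)

theory Defs
  imports "HOL-Analysis.Analysis" "HOL-Computational_Algebra.Polynomial"
begin

(* n x n matrices over k: 'k^'n^'n, with 'n a finite (nonempty) index type, n = CARD('n) >= 1 *)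

definition hom_poly_fun :: "nat \<Rightarrow> ('k::field^'n::finite^'n \<Rightarrow> 'k) \<Rightarrow> bool" where
  "hom_poly_fun m F \<longleftrightarrow>
     (\<exists>S c. finite S \<and> (\<forall>\<alpha>\<in>S. (\<Sum>i\<in>UNIV. \<Sum>j\<in>UNIV. \<alpha> i j) = m) \<and>
        F = (\<lambda>M. \<Sum>\<alpha>\<in>S. c \<alpha> * (\<Prod>i\<in>UNIV. \<Prod>j\<in>UNIV. (M $ i $ j) ^ (\<alpha> i j))))"

definition polyfun_k :: "('k::field \<Rightarrow> 'k) \<Rightarrow> bool" where
  "polyfun_k f \<longleftrightarrow> (\<exists>q. \<forall>t. f t = poly q t)"

text \<open>Homomorphisms of algebraic groups G_a -> GL(n,k): group homomorphisms (k,+) -> GL(n,k)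
  that are morphisms of varieties, i.e. pull back the coordinate ring k[x_ij, 1/det] to k[t].\<close>
definition hom_Ga_GL :: "('k::field \<Rightarrow> 'k^'n::finite^'n) set" where
  "hom_Ga_GL = {\<phi>. (\<forall>t. invertible (\<phi> t)) \<and>
      (\<forall>s t. \<phi> (s + t) = \<phi> s ** \<phi> t) \<and>
      (\<forall>i j. polyfun_k (\<lambda>t. \<phi> t $ i $ j)) \<and>
      polyfun_k (\<lambda>t. inverse (det (\<phi> t)))}"

text \<open>PGL(n,k) = GL(n,k) / scalars; elements are the cosets k^* M.\<close>
definition pgl_class :: "'k::field^'n::finite^'n \<Rightarrow> ('k^'n^'n) set" where
  "pgl_class M = {(\<chi> i j. c * M $ i $ j) | c. c \<noteq> 0}"

definition PGL :: "('k::field^'n::finite^'n) set set" where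
  "PGL = pgl_class ` {M. invertible M}"

definition pgl_mult :: "('k::field^'n::finite^'n) set \<Rightarrow> ('k^'n^'n) set \<Rightarrow> ('k^'n^'n) set" where
  "pgl_mult X Y = {A ** B | A B. A \<in> X \<and> B \<in> Y}"

text \<open>Homomorphisms of algebraic groups G_a -> PGL(n,k): group homomorphisms that are morphisms
  of varieties, i.e. every regular function on PGL(n,k) -- of the form P(A)/det(A)^d with P
  homogeneous of degree d*n in the entries -- pulls back to a polynomial in t.\<close>
definition hom_Ga_PGL :: "('k::field \<Rightarrow> ('k^'n::finite^'n) set) set" where
  "hom_Ga_PGL = {\<psi>. (\<forall>t. \<psi> t \<in> PGL) \<and>
      (\<forall>s t. \<psi> (s + t) = pgl_mult (\<psi> s) (\<psi> t)) \<and>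
      (\<forall>d P. hom_poly_fun (d * CARD('n)) P \<longrightarrow>
         (\<exists>q. \<forall>t. \<forall>A\<in>\<psi> t. P A / det A ^ d = poly q t))}"

definition varpi :: "('k::field \<Rightarrow> 'k^'n::finite^'n) \<Rightarrow> ('k \<Rightarrow> ('k^'n^'n) set)" where
  "varpi \<phi> = (\<lambda>t. pgl_class (\<phi> t))"

end

theory Submission
  imports Defs
begin



definition smat :: "'k::field \<Rightarrow> 'k^'n::finite^'n \<Rightarrow> 'k^'n^'n" where
  "smat c M = (\<chi> i j. c * M$i$j)"

lemma smat_nth [simp]: "smat c M $ i $ j = c * M $ i $ j"
  by (simp add: smat_def)

lemma smat_eq_mat: "smat c M = mat c ** M"
  by (simp add: vec_eq_iff matrix_matrix_mult_def mat_def if_distrib if_distribR sum.delta' cong: if_cong)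

lemma det_mat_c: "det (mat c :: 'k::field^'n::finite^'n) = c ^ CARD('n)"
  by (subst det_diagonal) (auto simp: mat_def)

lemma det_smat: "det (smat c (M::'k::field^'n::finite^'n)) = c ^ CARD('n) * det M"
  by (simp add: smat_eq_mat det_mul det_mat_c)

lemma smat_mult: "smat c A ** smat d B = smat (c*d) (A ** B)"
  by (simp add: vec_eq_iff matrix_matrix_mult_def sum_distrib_left mult_ac)

lemma smat_smat [simp]: "smat c (smat d A) = smat (c*d) A"
  by (simp add: vec_eq_iff mult_ac)

lemma smat_1 [simp]: "smat 1 A = A"
  by (simp add: vec_eq_iff)

lemma pgl_class_alt: "pgl_class M = {smat c M | c. c \<noteq> 0}"
  by (simp add: pgl_class_def smat_def)

lemma pgl_class_self: "M \<in> pgl_class M"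
  unfolding pgl_class_alt by (rule CollectI, rule exI[of _ 1]) simp

lemma pgl_class_smat: "c \<noteq> 0 \<Longrightarrow> pgl_class (smat c M) = pgl_class M"
proof -
  assume c: "c \<noteq> 0"
  have "smat d M \<in> pgl_class (smat c M)" if "d \<noteq> 0" for d
    unfolding pgl_class_alt using c that
    by (intro CollectI exI[of _ "d / c"]) simp
  moreover have "smat d (smat c M) \<in> pgl_class M" if "d \<noteq> 0" for d
    unfolding pgl_class_alt using c that by auto
  ultimately show ?thesis unfolding pgl_class_alt[of "smat c M"] pgl_class_alt[of M]
    by blast
qed

lemma pgl_class_mem: "A \<in> pgl_class M \<Longrightarrow> pgl_class A = pgl_class M"
proof -
  assume "A \<in> pgl_class M"
  then obtain c where "c \<noteq> 0" "A = smat c M" unfolding pgl_class_alt by auto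
  thus ?thesis using pgl_class_smat by simp
qed

lemma mat1_nz: "(mat 1 :: 'k::field^'n::finite^'n) \<noteq> 0"
proof
  assume h: "(mat 1 :: 'k::field^'n::finite^'n) = 0"
  have "(mat 1 :: 'k::field^'n::finite^'n) $ i $ i = 1" for i by (simp add: mat_def)
  with h show False by simp
qed

lemma invertible_nz: "invertible (M::'k::field^'n::finite^'n) \<Longrightarrow> M \<noteq> 0"
  using mat1_nz unfolding invertible_def by auto

lemma matrix_nz_entry: "(M::'k::field^'n::finite^'n) \<noteq> 0 \<Longrightarrow> \<exists>i j. M$i$j \<noteq> 0"
  by (simp add: vec_eq_iff) 



lemma pf_const: "polyfun_k (\<lambda>t. c)"
  unfolding polyfun_k_def by (rule exI[of _ "[:c:]"]) simp

lemma pf_id: "polyfun_k (\<lambda>t. t)"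
  unfolding polyfun_k_def by (rule exI[of _ "[:0,1:]"]) simp

lemma pf_add: "polyfun_k f \<Longrightarrow> polyfun_k g \<Longrightarrow> polyfun_k (\<lambda>t. f t + g t)"
proof -
  assume "polyfun_k f" "polyfun_k g"
  then obtain p q where "\<And>t. f t = poly p t" "\<And>t. g t = poly q t" unfolding polyfun_k_def by blast
  thus ?thesis unfolding polyfun_k_def by (intro exI[of _ "p + q"]) simp
qed

lemma pf_diff: "polyfun_k f \<Longrightarrow> polyfun_k g \<Longrightarrow> polyfun_k (\<lambda>t. f t - g t)"
proof -
  assume "polyfun_k f" "polyfun_k g"
  then obtain p q where "\<And>t. f t = poly p t" "\<And>t. g t = poly q t" unfolding polyfun_k_def by blast
  thus ?thesis unfolding polyfun_k_def by (intro exI[of _ "p - q"]) simp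
qed

lemma pf_mult: "polyfun_k f \<Longrightarrow> polyfun_k g \<Longrightarrow> polyfun_k (\<lambda>t. f t * g t)"
proof -
  assume "polyfun_k f" "polyfun_k g"
  then obtain p q where "\<And>t. f t = poly p t" "\<And>t. g t = poly q t" unfolding polyfun_k_def by blast
  thus ?thesis unfolding polyfun_k_def by (intro exI[of _ "p * q"]) simp
qed

lemma pf_power: "polyfun_k f \<Longrightarrow> polyfun_k (\<lambda>t. f t ^ m)"
proof -
  assume "polyfun_k f"
  then obtain p where "\<And>t. f t = poly p t" unfolding polyfun_k_def by blast
  thus ?thesis unfolding polyfun_k_def by (intro exI[of _ "p ^ m"]) simp
qed

lemma pf_sum: "(\<And>x. x \<in> A \<Longrightarrow> polyfun_k (f x)) \<Longrightarrow> polyfun_k (\<lambda>t. \<Sum>x\<in>A. f x t)"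
proof -
  assume "\<And>x. x \<in> A \<Longrightarrow> polyfun_k (f x)"
  then have "\<forall>x\<in>A. \<exists>q. \<forall>t. f x t = poly q t" unfolding polyfun_k_def by blast
  then obtain Q where Q: "\<forall>x\<in>A. \<forall>t. f x t = poly (Q x) t" by (rule bchoice[elim_format]) blast
  have "(\<Sum>x\<in>A. f x t) = poly (\<Sum>x\<in>A. Q x) t" for t
    unfolding poly_sum using Q by (intro sum.cong) auto
  then show ?thesis unfolding polyfun_k_def by blast
qed

lemma pf_prod: "(\<And>x. x \<in> A \<Longrightarrow> polyfun_k (f x)) \<Longrightarrow> polyfun_k (\<lambda>t. \<Prod>x\<in>A. f x t)"
proof -
  assume "\<And>x. x \<in> A \<Longrightarrow> polyfun_k (f x)"
  then have "\<forall>x\<in>A. \<exists>q. \<forall>t. f x t = poly q t" unfolding polyfun_k_def by blast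
  then obtain Q where Q: "\<forall>x\<in>A. \<forall>t. f x t = poly (Q x) t" by (rule bchoice[elim_format]) blast
  have "(\<Prod>x\<in>A. f x t) = poly (\<Prod>x\<in>A. Q x) t" for t
    unfolding poly_prod using Q by (intro prod.cong) auto
  then show ?thesis unfolding polyfun_k_def by blast
qed

lemma pf_shift: "polyfun_k f \<Longrightarrow> polyfun_k (\<lambda>t. f (s + t))"
proof -
  assume "polyfun_k f"
  then obtain p where "\<And>t. f t = poly p t" unfolding polyfun_k_def by blast
  thus ?thesis unfolding polyfun_k_def by (intro exI[of _ "pcompose p [:s,1:]"]) (simp add: poly_pcompose)
qed

lemma pf_det:
  fixes M :: "'k::field \<Rightarrow> 'k^'n::finite^'n"
  assumes "\<And>i j. polyfun_k (\<lambda>t. M t $ i $ j)"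
  shows "polyfun_k (\<lambda>t. det (M t))"
  unfolding det_def
  by (intro pf_sum pf_mult pf_const pf_prod assms)

lemma pf_zero:
  assumes "polyfun_k f" "infinite {t. f t = 0}"
  shows "f t = 0"
proof -
  obtain q where q: "\<And>t. f t = poly q t" using assms(1) unfolding polyfun_k_def by blast
  have "q = 0" using assms(2) poly_roots_finite[of q] unfolding q by blast
  thus ?thesis by (simp add: q)
qed

lemma infinite_alg_closed: "infinite (UNIV :: 'k::alg_closed_field set)"
proof
  assume fin: "finite (UNIV :: 'k set)"
  define p :: "'k poly" where "p = (\<Prod>a\<in>UNIV. [:-a, 1:]) + 1"
  have dprod: "degree (\<Prod>a\<in>(UNIV::'k set). [:-a, 1:]) = card (UNIV :: 'k set)"
    by (subst degree_prod_eq_sum_degree) auto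
  have "card (UNIV :: 'k set) > 0" using fin by (simp add: card_gt_0_iff)
  hence "degree p > 0" unfolding p_def
    using dprod by (subst degree_add_eq_left) auto
  then obtain x where "poly p x = 0" using alg_closed_imp_poly_has_root by blast
  moreover have "poly (\<Prod>a\<in>(UNIV::'k set). [:-a, 1:]) x = 0"
    unfolding poly_prod using fin by (intro prod_zero) auto
  ultimately show False unfolding p_def by simp
qed

lemma pf_nonzero_const:
  fixes f :: "'k::alg_closed_field \<Rightarrow> 'k"
  assumes "polyfun_k f" "\<And>t. f t \<noteq> 0"
  shows "\<exists>c. \<forall>t. f t = c"
proof -
  obtain q where q: "\<And>t. f t = poly q t" using assms(1) unfolding polyfun_k_def by blast
  have "\<not> degree q > 0" using alg_closed_imp_poly_has_root[of q] assms(2) q by auto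
  hence "degree q = 0" by simp
  then obtain a where "q = [:a:]" by (rule degree_eq_zeroE)
  thus ?thesis using q by auto
qed

lemma finite_roots_pow: "0 < m \<Longrightarrow> finite {z :: 'k::field. z ^ m = a}"
proof -
  assume m: "0 < m"
  define p :: "'k poly" where "p = monom 1 m - [:a:]"
  have "coeff p m = 1" using m by (simp add: p_def coeff_pCons split: nat.split)
  hence "p \<noteq> 0" by auto
  moreover have "{z. z ^ m = a} = {z. poly p z = 0}" by (auto simp: p_def poly_monom)
  ultimately show ?thesis using poly_roots_finite by simp
qed

lemma fin_values_const:
  fixes F G :: "'k::alg_closed_field \<Rightarrow> 'k^'n::finite^'n"
  assumes Z: "finite Z"
    and F: "\<And>i j. polyfun_k (\<lambda>t. F t $ i $ j)"
    and G: "\<And>i j. polyfun_k (\<lambda>t. G t $ i $ j)"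
    and FG: "\<And>t. \<exists>z\<in>Z. F t = smat z (G t)"
  shows "\<exists>z\<in>Z. \<forall>t. F t = smat z (G t)"
proof -
  have "UNIV = (\<Union>z\<in>Z. {t. F t = smat z (G t)})" using FG by blast
  hence "infinite (\<Union>z\<in>Z. {t. F t = smat z (G t)})" using infinite_alg_closed by metis
  then obtain z where z: "z \<in> Z" "infinite {t. F t = smat z (G t)}" using Z by blast
  have "F t $ i $ j - z * G t $ i $ j = 0" for t i j
  proof (rule pf_zero[where f = "\<lambda>t. F t $ i $ j - z * G t $ i $ j"])
    show "polyfun_k (\<lambda>t. F t $ i $ j - z * G t $ i $ j)"
      by (intro pf_diff pf_mult pf_const F G)
    show "infinite {t. F t $ i $ j - z * G t $ i $ j = 0}"
      using z(2) by (rule infinite_super[rotated]) auto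
  qed
  hence "\<forall>t. F t = smat z (G t)" by (simp add: vec_eq_iff)
  thus ?thesis using z by blast
qed



lemma hom_poly_smat:
  fixes P :: "'k::field^'n::finite^'n \<Rightarrow> 'k"
  assumes "hom_poly_fun m P"
  shows "P (smat c M) = c ^ m * P M"
proof -
  obtain S a where S: "\<forall>\<alpha>\<in>S. (\<Sum>i\<in>UNIV. \<Sum>j\<in>UNIV. \<alpha> i j) = m"
    and P: "P = (\<lambda>M. \<Sum>\<alpha>\<in>S. a \<alpha> * (\<Prod>i\<in>UNIV. \<Prod>j\<in>UNIV. (M $ i $ j) ^ (\<alpha> i j)))"
    using assms unfolding hom_poly_fun_def by blast
  have mono: "(\<Prod>i\<in>UNIV. \<Prod>j\<in>UNIV. (c * M $ i $ j) ^ (\<alpha> i j))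
      = c ^ m * (\<Prod>i\<in>UNIV. \<Prod>j\<in>UNIV. (M $ i $ j) ^ (\<alpha> i j))" if "\<alpha> \<in> S" for \<alpha>
  proof -
    have "(\<Prod>i\<in>UNIV. \<Prod>j\<in>UNIV. (c * M $ i $ j) ^ (\<alpha> i j))
       = (\<Prod>i\<in>UNIV. \<Prod>j\<in>UNIV. c ^ (\<alpha> i j)) * (\<Prod>i\<in>UNIV. \<Prod>j\<in>UNIV. (M $ i $ j) ^ (\<alpha> i j))"
      by (simp add: power_mult_distrib prod.distrib)
    also have "(\<Prod>i\<in>UNIV. \<Prod>j\<in>UNIV. c ^ (\<alpha> i j)) = c ^ (\<Sum>i\<in>UNIV. \<Sum>j\<in>UNIV. \<alpha> i j)"
      by (simp add: power_sum)
    finally show ?thesis using S that by simp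
  qed
  show ?thesis unfolding P
    by (simp add: sum_distrib_left mono mult_ac cong: sum.cong)
qed

lemma hom_poly_pf:
  fixes P :: "'k::field^'n::finite^'n \<Rightarrow> 'k"
  assumes "hom_poly_fun m P" "\<And>i j. polyfun_k (\<lambda>t. M t $ i $ j)"
  shows "polyfun_k (\<lambda>t. P (M t))"
proof -
  obtain S a where P: "P = (\<lambda>M. \<Sum>\<alpha>\<in>S. a \<alpha> * (\<Prod>i\<in>UNIV. \<Prod>j\<in>UNIV. (M $ i $ j) ^ (\<alpha> i j)))"
    using assms unfolding hom_poly_fun_def by blast
  show ?thesis unfolding P
    by (intro pf_sum pf_mult pf_const pf_prod pf_power assms(2))
qed

lemma sum_delta2:
  fixes a b :: "'n::finite" and f :: "'n \<Rightarrow> 'n \<Rightarrow> 'a::comm_monoid_add"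
  shows "(\<Sum>i\<in>UNIV. \<Sum>j\<in>UNIV. if i = a then if j = b then f i j else 0 else 0) = f a b"
proof -
  have "(\<Sum>j\<in>UNIV. if i = a then if j = b then f i j else 0 else 0) = (if i = a then f i b else 0)" for i
    by (cases "i = a") auto
  thus ?thesis by simp
qed
lemma prod_delta2:
  fixes a b :: "'n::finite" and f :: "'n \<Rightarrow> 'n \<Rightarrow> 'a::comm_monoid_mult"
  shows "(\<Prod>i\<in>UNIV. \<Prod>j\<in>UNIV. if i = a then if j = b then f i j else 1 else 1) = f a b"
proof -
  have "(\<Prod>j\<in>UNIV. if i = a then if j = b then f i j else 1 else 1) = (if i = a then f i b else 1)" for i
    by (cases "i = a") auto
  thus ?thesis by simp
qed
lemma hom_poly_monomial:
  fixes a b k l :: "'n::finite"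
  shows "hom_poly_fun (Suc r) (\<lambda>A::'k::field^'n^'n. A $ a $ b * A $ k $ l ^ r)"
proof -
  define \<alpha> where "\<alpha> = (\<lambda>i j. (if i = a then (if j = b then 1 else 0) else 0)
                       + (if i = k then (if j = l then r else 0) else (0::nat)))"
  have sum: "(\<Sum>i\<in>UNIV. \<Sum>j\<in>UNIV. \<alpha> i j) = Suc r"
    unfolding \<alpha>_def by (simp add: sum.distrib sum_delta2)
  have e: "x ^ (if P then (if Q then m else 0) else 0) = (if P then (if Q then x ^ m else 1) else 1)"
    for x :: 'k and P Q m by simp
  have prd: "(\<Prod>i\<in>UNIV. \<Prod>j\<in>UNIV. (A $ i $ j) ^ (\<alpha> i j)) = A $ a $ b * A $ k $ l ^ r"
    for A :: "'k^'n^'n"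
    unfolding \<alpha>_def by (simp only: power_add prod.distrib e prod_delta2) simp
  show ?thesis unfolding hom_poly_fun_def
    by (intro exI[of _ "{\<alpha>}"] exI[of _ "\<lambda>_. 1"]) (simp add: sum prd)
qed



lemma GL_0:
  fixes \<phi> :: "'k::field \<Rightarrow> 'k^'n::finite^'n"
  assumes "\<phi> \<in> hom_Ga_GL"
  shows "\<phi> 0 = mat 1"
proof -
  have inv: "invertible (\<phi> 0)" and hom: "\<phi> (0 + 0) = \<phi> 0 ** \<phi> 0"
    using assms unfolding hom_Ga_GL_def by blast+
  obtain B where B: "\<phi> 0 ** B = mat 1" using inv unfolding invertible_def by blast
  have "mat 1 = (\<phi> 0 ** \<phi> 0) ** B" using hom B by simp
  also have "\<dots> = \<phi> 0" by (simp add: matrix_mul_assoc[symmetric] B)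
  finally show ?thesis by simp
qed

lemma GL_det:
  fixes \<phi> :: "'k::alg_closed_field \<Rightarrow> 'k^'n::finite^'n"
  assumes "\<phi> \<in> hom_Ga_GL"
  shows "det (\<phi> t) = 1"
proof -
  have inv: "\<And>t. invertible (\<phi> t)" and pf: "\<And>i j. polyfun_k (\<lambda>t. \<phi> t $ i $ j)"
    using assms unfolding hom_Ga_GL_def by blast+
  have "polyfun_k (\<lambda>t. det (\<phi> t))" by (rule pf_det[OF pf])
  moreover have "\<And>t. det (\<phi> t) \<noteq> 0" using inv invertible_det_nz by blast
  ultimately obtain c where c: "\<And>t. det (\<phi> t) = c" using pf_nonzero_const by blast
  have "c = 1" using c[of 0] GL_0[OF assms] by simp
  thus ?thesis using c by simp
qed

lemma GL_reg:
  fixes \<phi> :: "'k::alg_closed_field \<Rightarrow> 'k^'n::finite^'n"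
  assumes "\<phi> \<in> hom_Ga_GL" "hom_poly_fun (d * CARD('n)) P" "A \<in> pgl_class (\<phi> t)"
  shows "P A / det A ^ d = P (\<phi> t)"
proof -
  obtain c where c: "c \<noteq> 0" "A = smat c (\<phi> t)" using assms(3) unfolding pgl_class_alt by blast
  have dA: "det A = c ^ CARD('n)" using c by (simp add: det_smat GL_det[OF assms(1)])
  have PA: "P A = c ^ (d * CARD('n)) * P (\<phi> t)" using c(2) hom_poly_smat[OF assms(2)] by simp
  have cc: "c ^ (d * CARD('n)) = (c ^ CARD('n)) ^ d"
    by (simp add: power_mult[symmetric] mult.commute)
  have cnz: "(c ^ CARD('n)) ^ d \<noteq> 0" using c(1) by simp
  show ?thesis unfolding PA dA cc using cnz by simp
qed

lemma GL_into:
  fixes \<phi> :: "'k::alg_closed_field \<Rightarrow> 'k^'n::finite^'n"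
  assumes "\<phi> \<in> hom_Ga_GL"
  shows "varpi \<phi> \<in> hom_Ga_PGL"
proof -
  have inv: "\<And>t. invertible (\<phi> t)" and pf: "\<And>i j. polyfun_k (\<lambda>t. \<phi> t $ i $ j)"
    and hom: "\<And>s t. \<phi> (s + t) = \<phi> s ** \<phi> t"
    using assms unfolding hom_Ga_GL_def by blast+
  have det1: "\<And>t. det (\<phi> t) = 1" using GL_det[OF assms] .
  have A: "pgl_class (\<phi> t) \<in> PGL" for t unfolding PGL_def using inv by blast
  have B: "pgl_class (\<phi> (s + t)) = pgl_mult (pgl_class (\<phi> s)) (pgl_class (\<phi> t))" for s t
  proof
    show "pgl_class (\<phi> (s + t)) \<subseteq> pgl_mult (pgl_class (\<phi> s)) (pgl_class (\<phi> t))"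
    proof
      fix X assume "X \<in> pgl_class (\<phi> (s + t))"
      then obtain c where c: "c \<noteq> 0" "X = smat c (\<phi> (s + t))" unfolding pgl_class_alt by blast
      have "smat c (\<phi> s) ** smat 1 (\<phi> t) = smat c (\<phi> s ** \<phi> t)"
        by (subst smat_mult) simp
      hence "X = smat c (\<phi> s) ** smat 1 (\<phi> t)" using c hom by simp
      moreover have "smat c (\<phi> s) \<in> pgl_class (\<phi> s)"
        using c unfolding pgl_class_alt by auto
      moreover have "smat 1 (\<phi> t) \<in> pgl_class (\<phi> t)" by (simp add: pgl_class_self)
      ultimately show "X \<in> pgl_mult (pgl_class (\<phi> s)) (pgl_class (\<phi> t))"
        unfolding pgl_mult_def by blast
    qed
  next
    show "pgl_mult (pgl_class (\<phi> s)) (pgl_class (\<phi> t)) \<subseteq> pgl_class (\<phi> (s + t))"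
    proof
      fix X assume "X \<in> pgl_mult (pgl_class (\<phi> s)) (pgl_class (\<phi> t))"
      then obtain c d where "c \<noteq> 0" "d \<noteq> 0" "X = smat c (\<phi> s) ** smat d (\<phi> t)"
        unfolding pgl_mult_def pgl_class_alt by blast
      hence "c * d \<noteq> 0" "X = smat (c * d) (\<phi> (s + t))" using hom by (auto simp: smat_mult)
      thus "X \<in> pgl_class (\<phi> (s + t))" unfolding pgl_class_alt by blast
    qed
  qed
  have C: "\<exists>q. \<forall>t. \<forall>A\<in>pgl_class (\<phi> t). P A / det A ^ d = poly q t"
    if P: "hom_poly_fun (d * CARD('n)) P" for d P
  proof -
    have "polyfun_k (\<lambda>t. P (\<phi> t))" by (rule hom_poly_pf[OF P pf])
    then obtain q where q0: "\<forall>t. P (\<phi> t) = poly q t" unfolding polyfun_k_def by (rule exE)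
    show ?thesis
      by (intro exI[of _ q] allI ballI) (simp only: GL_reg[OF assms P] q0[rule_format])
  qed
  show ?thesis unfolding hom_Ga_PGL_def varpi_def using A B C by blast
qed

lemma GL_inj: "inj_on (varpi :: ('k::alg_closed_field \<Rightarrow> 'k^'n::finite^'n) \<Rightarrow> _) hom_Ga_GL"
proof (rule inj_onI)
  fix \<phi> \<phi>' :: "'k \<Rightarrow> 'k^'n^'n"
  assume \<phi>: "\<phi> \<in> hom_Ga_GL" and \<phi>': "\<phi>' \<in> hom_Ga_GL" and eq: "varpi \<phi> = varpi \<phi>'"
  have pf: "\<And>i j. polyfun_k (\<lambda>t. \<phi> t $ i $ j)" and pf': "\<And>i j. polyfun_k (\<lambda>t. \<phi>' t $ i $ j)"
    using \<phi> \<phi>' unfolding hom_Ga_GL_def by blast+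
  have cls: "pgl_class (\<phi>' t) = pgl_class (\<phi> t)" for t
    using fun_cong[OF eq, of t] unfolding varpi_def by simp
  have ex: "\<exists>z\<in>{z. z ^ CARD('n) = 1}. \<phi>' t = smat z (\<phi> t)" for t
  proof -
    have "\<phi>' t \<in> pgl_class (\<phi> t)" using cls pgl_class_self by metis
    then obtain c where c: "c \<noteq> 0" "\<phi>' t = smat c (\<phi> t)" unfolding pgl_class_alt by blast
    have "det (\<phi>' t) = c ^ CARD('n) * det (\<phi> t)" using c by (simp add: det_smat)
    hence "c ^ CARD('n) = 1" using GL_det[OF \<phi>] GL_det[OF \<phi>'] by simp
    thus ?thesis using c by blast
  qed
  obtain z where z: "\<And>t. \<phi>' t = smat z (\<phi> t)"
    using fin_values_const[OF finite_roots_pow[OF zero_less_card_finite] pf' pf ex] by blast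
  have eq1: "mat 1 = smat z (mat 1 :: 'k^'n^'n)" using z[of 0] GL_0[OF \<phi>] GL_0[OF \<phi>'] by simp
  have "smat z (mat 1 :: 'k^'n^'n) $ i $ i = (mat 1 :: 'k^'n^'n) $ i $ i" for i
    by (simp only: eq1[symmetric])
  hence "z = 1" by (simp add: mat_def)
  thus "\<phi> = \<phi>'" using z by (simp add: fun_eq_iff)
qed



lemma smat_mult_left: "smat c A ** B = smat c (A ** B)"
  using smat_mult[of c A 1 B] by simp

lemma smat_mult_right: "A ** smat c B = smat c (A ** B)"
  using smat_mult[of 1 A c B] by simp

lemma PGL_surj:
  fixes \<psi> :: "'k::alg_closed_field \<Rightarrow> ('k^'n::finite^'n) set"
  assumes "\<psi> \<in> hom_Ga_PGL"
  shows "\<exists>\<phi>\<in>hom_Ga_GL. varpi \<phi> = \<psi>"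
proof -
  have inPGL: "\<And>t. \<psi> t \<in> PGL" and hom: "\<And>s t. \<psi> (s+t) = pgl_mult (\<psi> s) (\<psi> t)"
   and reg: "\<And>d P. hom_poly_fun (d * CARD('n)) P \<Longrightarrow> \<exists>q. \<forall>t. \<forall>A\<in>\<psi> t. P A / det A ^ d = poly q t"
    using assms unfolding hom_Ga_PGL_def by blast+
  obtain m where m: "CARD('n) = Suc m" using zero_less_card_finite gr0_implies_Suc by blast
  have cls: "\<psi> t = pgl_class A \<and> det A \<noteq> 0" if A: "A \<in> \<psi> t" for t A
  proof -
    obtain M where M: "invertible M" "\<psi> t = pgl_class M" using inPGL[of t] unfolding PGL_def by blast
    then obtain c where c: "c \<noteq> 0" "A = smat c M" using A unfolding pgl_class_alt by blast
    show ?thesis using M c pgl_class_mem A by (auto simp: det_smat invertible_det_nz)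
  qed
  have nonempty: "\<And>t. \<exists>A. A \<in> \<psi> t" using inPGL pgl_class_self unfolding PGL_def by blast
  define rep where "rep t = (SOME A. A \<in> \<psi> t)" for t
  have rep: "\<And>t. rep t \<in> \<psi> t" unfolding rep_def using nonempty by (metis someI_ex)
  have repD: "\<And>t. det (rep t) \<noteq> 0" using cls rep by blast
  define Q where "Q a b k l = (SOME q. \<forall>t. \<forall>A\<in>\<psi> t. A$a$b * A$k$l^m / det A = poly q t)" for a b k l
  have Q: "A$a$b * A$k$l^m / det A = poly (Q a b k l) t" if "A \<in> \<psi> t" for a b k l t A
  proof -
    have "hom_poly_fun (1 * CARD('n)) (\<lambda>A::'k^'n^'n. A$a$b * A$k$l^m)"
      using hom_poly_monomial[where a=a and b=b and k=k and l=l and r=m] m by simp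
    from reg[OF this] have "\<exists>q. \<forall>t. \<forall>A\<in>\<psi> t. A$a$b * A$k$l^m / det A = poly q t" by simp
    from someI_ex[OF this] show ?thesis using that unfolding Q_def by blast
  qed
  have Qr: "\<And>a b k l t. rep t$a$b * rep t$k$l^m / det (rep t) = poly (Q a b k l) t"
    using Q rep by blast
  have "rep 0 \<noteq> 0" using repD[of 0] invertible_det_nz invertible_nz by blast
  then obtain k0 l0 where kl0: "rep 0 $ k0 $ l0 \<noteq> 0" using matrix_nz_entry by blast
  define p where "p a b = Q a b k0 l0" for a b
  define P0 where "P0 t = (\<chi> i j. poly (p i j) t)" for t
  have P0_nth: "P0 t $ i $ j = poly (p i j) t" for t i j by (simp add: P0_def)
  have P0_smat: "P0 t = smat (A$k0$l0^m / det A) A" if "A \<in> \<psi> t" for t A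
    unfolding vec_eq_iff P0_nth p_def
    using Q[OF that] by (auto simp: ac_simps)
  have I1: "poly (p a b) t * poly (p k l) t ^ m = det (P0 t) * poly (Q a b k l) t" for t a b k l
  proof -
    define A where "A = rep t"
    define lam where "lam = A$k0$l0^m / det A"
    have D: "det A \<noteq> 0" using repD A_def by blast
    have e: "P0 t = smat lam A" using P0_smat rep lam_def A_def by blast
    have pa: "poly (p a' b') t = lam * A$a'$b'" for a' b' using e P0_nth[of t a' b'] by simp
    have dt: "det (P0 t) = lam^Suc m * det A" using e det_smat m by metis
    show ?thesis using Qr[where a=a and b=b and k=k and l=l and t=t] D unfolding pa dt A_def[symmetric]
      by (simp add: power_mult_distrib field_simps)
  qed
  have p_nz: "p k0 l0 \<noteq> 0"
  proof
    assume "p k0 l0 = 0"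
    hence "poly (p k0 l0) 0 = 0" by simp
    moreover have "poly (p k0 l0) 0 = rep 0 $k0$l0 * rep 0 $k0$l0^m / det (rep 0)"
      using Qr[where a=k0 and b=l0 and k=k0 and l=l0 and t=0] p_def by simp
    ultimately show False using kl0 repD[of 0] by simp
  qed
  define DV where "DV d = (\<exists>h. degree h = d \<and> h \<noteq> 0 \<and> (\<forall>a b. h dvd p a b))" for d
  have DV0: "DV 0" unfolding DV_def by (intro exI[of _ 1]) simp
  have bound: "\<forall>d. DV d \<longrightarrow> (\<lambda>x. x) d < Suc (degree (p k0 l0))"
    unfolding DV_def using dvd_imp_degree_le p_nz by (simp add: less_Suc_eq_le) blast
  obtain dmax where dmax: "DV dmax" "\<forall>d. DV d \<longrightarrow> d \<le> dmax"
    using ex_has_greatest_nat[where f="\<lambda>x. x", OF DV0 bound] by blast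
  obtain h where h: "h \<noteq> 0" "degree h = dmax" "\<And>a b. h dvd p a b"
    using dmax(1) unfolding DV_def by blast
  define bp where "bp a b = p a b div h" for a b
  have pb: "p a b = h * bp a b" for a b using h(3) by (simp add: bp_def)
  have nocommon: "\<exists>a b. poly (bp a b) t \<noteq> 0" for t
  proof (rule ccontr)
    assume "\<not> (\<exists>a b. poly (bp a b) t \<noteq> 0)"
    hence "[:-t,1:] dvd bp a b" for a b using poly_eq_0_iff_dvd by blast
    hence dv: "h * [:-t,1:] dvd p a b" for a b unfolding pb[of a b] by (intro mult_dvd_mono) auto
    have "degree (h * [:-t,1:]) = degree h + degree [:-t,1:]"
      using h(1) by (intro degree_mult_eq) auto
    hence "degree (h * [:-t,1:]) = dmax + 1" using h(2) by simp
    moreover have "h * [:-t,1:] \<noteq> 0" using h(1) by (intro no_zero_divisors) auto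
    ultimately have "DV (dmax + 1)" unfolding DV_def using dv by blast
    thus False using dmax(2) by force
  qed
  define b where "b t = (\<chi> i j. poly (bp i j) t)" for t
  have b_nth: "b t $ i $ j = poly (bp i j) t" for t i j by (simp add: b_def)
  have P0b: "P0 t = smat (poly h t) (b t)" for t
    by (simp add: vec_eq_iff P0_nth b_nth pb)
  have pfb: "\<And>i j. polyfun_k (\<lambda>t. b t $ i $ j)" unfolding b_nth polyfun_k_def by blast
  have pfdetb: "polyfun_k (\<lambda>t. det (b t))" by (rule pf_det[OF pfb])
  have pfQ: "polyfun_k (\<lambda>t. poly q t)" for q unfolding polyfun_k_def by blast
  have I2: "b t$i$j * b t$k$l^m = det (b t) * poly (Q i j k l) t" for t i j k l
  proof -
    have eq: "poly h t ^ Suc m * (b t$i$j * b t$k$l^m - det (b t) * poly (Q i j k l) t) = 0" for t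
    proof -
      have "poly (p i j) t * poly (p k l) t ^ m = det (P0 t) * poly (Q i j k l) t" by (rule I1)
      hence "(poly h t * b t$i$j) * (poly h t * b t$k$l) ^ m
             = (poly h t ^ Suc m * det (b t)) * poly (Q i j k l) t"
        unfolding P0b det_smat m[symmetric] using P0b P0_nth by (metis smat_nth)
      thus ?thesis by (simp add: power_mult_distrib algebra_simps)
    qed
    have fin: "finite {t. poly h t = 0}" using poly_roots_finite h(1) by blast
    have "UNIV - {t. poly h t = 0} \<subseteq> {t. b t$i$j * b t$k$l^m - det (b t) * poly (Q i j k l) t = 0}"
      using eq by auto
    moreover have "infinite (UNIV - {t. poly h t = 0})"
      using fin infinite_alg_closed by (metis Diff_infinite_finite)
    ultimately have inf: "infinite {t. b t$i$j * b t$k$l^m - det (b t) * poly (Q i j k l) t = 0}"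
      using infinite_super by blast
    have "b t$i$j * b t$k$l^m - det (b t) * poly (Q i j k l) t = 0"
      by (rule pf_zero[OF _ inf]) (intro pf_diff pf_mult pf_power pfb pfdetb pfQ)
    thus ?thesis by simp
  qed
  have detb: "det (b t) \<noteq> 0" for t
  proof
    assume d0: "det (b t) = 0"
    have "b t$i$j ^ Suc m = 0" for i j using I2[of t i j i j] d0 by simp
    hence "poly (bp i j) t = 0" for i j unfolding b_nth by (metis power_eq_0_iff)
    thus False using nocommon[of t] by blast
  qed
  have bcls: "\<psi> t = pgl_class (b t)" for t
  proof -
    define A where "A = rep t"
    have D: "det A \<noteq> 0" using repD A_def by blast
    obtain k l where kl: "b t$k$l \<noteq> 0" using nocommon[of t] unfolding b_nth by blast
    have Qk: "poly (Q i j k l) t = A$i$j * A$k$l^m / det A" for i j using Qr[where a=i and b=j and k=k and l=l and t=t] A_def by simp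
    have "b t$k$l ^ Suc m = det (b t) * (A$k$l ^ Suc m / det A)"
      using I2[of t k l k l] Qk[of k l] by simp
    hence akl: "A$k$l \<noteq> 0" using kl by auto
    define c where "c = det (b t) * A$k$l^m / (det A * b t$k$l^m)"
    have cnz: "c \<noteq> 0" using akl kl D detb unfolding c_def by simp
    have "b t = smat c A"
    proof (unfold vec_eq_iff, intro allI)
      fix i j
      have "b t$i$j * b t$k$l^m = det (b t) * (A$i$j * A$k$l^m / det A)"
        using I2[of t i j k l] Qk[of i j] by simp
      thus "b t $ i $ j = smat c A $ i $ j" using kl D unfolding c_def
        by (simp add: field_simps)
    qed
    hence "pgl_class (b t) = pgl_class A" using pgl_class_smat cnz by simp
    thus ?thesis using cls[OF rep[of t]] A_def by simp
  qed
  obtain c0 where c0: "\<And>t. det (b t) = c0" using pf_nonzero_const[OF pfdetb detb] by blast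
  have c0nz: "c0 \<noteq> 0" using detb c0 by metis
  have mu: "\<exists>z\<in>{z. z^CARD('n) = c0}. b s ** b t = smat z (b (s+t))" for s t
  proof -
    have "b s ** b t \<in> \<psi> (s+t)" using hom[of s t] bcls pgl_class_self unfolding pgl_mult_def by blast
    then obtain z where z: "z \<noteq> 0" "b s ** b t = smat z (b (s+t))"
      using bcls unfolding pgl_class_alt by blast
    have "det (b s ** b t) = det (smat z (b (s+t)))" using z(2) by simp
    hence "c0 * c0 = z^CARD('n) * c0" by (simp add: det_mul det_smat c0)
    hence "z^CARD('n) = c0" using c0nz by simp
    thus ?thesis using z by blast
  qed
  have fin0: "finite {z. z^CARD('n) = c0}" by (rule finite_roots_pow[OF zero_less_card_finite])
  have pfprod: "polyfun_k (\<lambda>t. (b s ** b t) $ i $ j)" for s i j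
    unfolding matrix_matrix_mult_def by simp (intro pf_sum pf_mult pf_const pfb)
  have pfshift: "polyfun_k (\<lambda>t. b (s+t) $ i $ j)" for s i j by (rule pf_shift[OF pfb])
  have "\<forall>s. \<exists>z. \<forall>t. b s ** b t = smat z (b (s+t))"
    using fin_values_const[OF fin0 pfprod pfshift mu] by blast
  then obtain Z where Z: "\<And>s t. b s ** b t = smat (Z s) (b (s+t))" by metis
  define \<kappa> where "\<kappa> = Z 0"
  obtain B where B: "b 0 ** B = mat 1" using detb[of 0] invertible_det_nz unfolding invertible_def by blast
  have b0: "b 0 = smat \<kappa> (mat 1)"
  proof -
    have "b 0 = (b 0 ** b 0) ** B" using B by (simp add: matrix_mul_assoc[symmetric])
    also have "\<dots> = smat \<kappa> (mat 1)" using Z[of 0 0] B by (simp add: \<kappa>_def smat_mult_left)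
    finally show ?thesis .
  qed
  have \<kappa>nz: "\<kappa> \<noteq> 0" using detb[of 0] b0 by (auto simp: det_smat)
  have Zs: "Z s = \<kappa>" for s
  proof -
    have "smat \<kappa> (b s) = smat (Z s) (b s)" using Z[of s 0] b0 by (simp add: smat_mult_right)
    moreover have "b s \<noteq> 0" using detb[of s] invertible_det_nz invertible_nz by blast
    then obtain i j where "b s $ i $ j \<noteq> 0" using matrix_nz_entry by blast
    ultimately show ?thesis by (metis mult_right_cancel smat_nth)
  qed
  define \<phi> where "\<phi> t = smat (1/\<kappa>) (b t)" for t
  show ?thesis
  proof (intro bexI[of _ \<phi>])
    show "varpi \<phi> = \<psi>" unfolding varpi_def \<phi>_def
      using \<kappa>nz by (simp add: fun_eq_iff pgl_class_smat bcls)
    have inv: "invertible (\<phi> t)" for t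
      using detb \<kappa>nz by (simp add: \<phi>_def invertible_det_nz det_smat)
    have hm: "\<phi> (s + t) = \<phi> s ** \<phi> t" for s t
      using \<kappa>nz by (simp add: \<phi>_def smat_mult Z Zs)
    have pf: "polyfun_k (\<lambda>t. \<phi> t $ i $ j)" for i j
      unfolding \<phi>_def smat_nth by (intro pf_mult pf_const pfb)
    have pfd: "polyfun_k (\<lambda>t. inverse (det (\<phi> t)))"
      by (simp add: \<phi>_def det_smat c0 pf_const)
    show "\<phi> \<in> hom_Ga_GL" unfolding hom_Ga_GL_def using inv hm pf pfd by blast
  qed
qed

theorem lemma1p6:
  shows "bij_betw (varpi :: ('k::alg_closed_field \<Rightarrow> 'k^'n::finite^'n) \<Rightarrow> _)
           hom_Ga_GL hom_Ga_PGL"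
  unfolding bij_betw_def
proof
  show "inj_on (varpi :: ('k::alg_closed_field \<Rightarrow> 'k^'n::finite^'n) \<Rightarrow> _) hom_Ga_GL"
    by (rule GL_inj)
  show "(varpi :: ('k::alg_closed_field \<Rightarrow> 'k^'n::finite^'n) \<Rightarrow> _) ` hom_Ga_GL = hom_Ga_PGL"
    using GL_into PGL_surj by blast
qed

end
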